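(* Let $X\in\mathbb{R}^{N\times D}$, $y\in\mathbb{R}^N$ be partitioned into row blocks $X_i\in\mathbb{R}^{N_i\times D}$, $y_i\in\mathbb{R}^{N_i}$, $i\in[E]$, with $\sum_i N_i = N$. Write $Z = X^\top X$ and $Z_i = X_i^\top X_i$, and assume every $Z_i$ is invertible (hence so is $Z=\sum_i Z_i$). Let $w^* = Z^{-1}X^\top y$ and $w_i^* = Z_i^{-1}X_i^\top y_i$. Suppose that for each $i\in[E]$ there are $\beta_i\in\mathbb{R}^D$ and $r_i\in\mathbb{R}^{N_i}$ with $y_i = X_i\beta_i + r_i$. Define $\eta_i = Z_i^{-1}X_i^\top r_i$, $\eta = Z^{-1}X^\top r$ where $r\in\mathbb{R}^N$ is the concatenation of $r_1,\dots,r_E$, and for $i\neq j$ let $\Delta_{ij} = Z^{-1}Z_j(\beta_i-\beta_j)$ and $\Delta_i = \sum_{j\neq i}\Delta_{ij}$. Let $\gamma\in(0,1]$. If $$\|\Delta_i\| \ge \|\beta_i + \eta\| + \frac{1}{\sqrt{\gamma}}\|\beta_i+\eta_i\| \quad\text{for all } i\in[E],$$ then $\max_{i\in[E]}\|w_i^*\|^2 \le \gamma\|w^*\|^2$. Moreover, if $\|\eta\|\le \min_{i\in[E]}\|\beta_i\|$ and $\|\eta_i\|\le\|\beta_i\|$ for all $i\in[E]$, then the same conclusion $\max_{i}\|w_i^*\|^2\le\gamma\|w^*\|^2$ holds under the condition $\min_{i\in[E]}\big\{\|\Delta_i\| - \tfrac{4}{\sqrt{\gamma}}\|\beta_i\|\big\}\ge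 0$.
   Context: $\|\cdot\|$ denotes the Euclidean norm and $[E]=\{1,\dots,E\}$. $w^*$ is the least-squares solution of $\min_w\|Xw-y\|^2$ and $w_i^*$ that of $\min_{w_i}\|X_iw_i-y_i\|^2$. *)

theory Defs
  imports "HOL-Analysis.Analysis"
begin

text \<open>Row-block partition: the rows of X (indexed by the finite type 'n) are
assigned to blocks by blk :: 'n => nat with values in {1..E}.  The block
matrix X_i is represented by zeroing all rows outside block i; then
X_i^T X_i and X_i^T y_i are unchanged.\<close>

definition blockmat :: "('n \<Rightarrow> nat) \<Rightarrow> nat \<Rightarrow> real^'d^'n \<Rightarrow> real^'d^'n" where
  "blockmat blk i X = (\<chi> k. if blk k = i then X $ k else 0)"

definition blockvec :: "('n \<Rightarrow> nat) \<Rightarrow> nat \<Rightarrow> real^'n \<Rightarrow> real^'n" where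
  "blockvec blk i y = (\<chi> k. if blk k = i then y $ k else 0)"

definition gram :: "real^'d^'n \<Rightarrow> real^'d^'d" where
  "gram X = transpose X ** X"

definition lsq :: "real^'d^'n \<Rightarrow> real^'n \<Rightarrow> real^'d" where
  "lsq X y = matrix_inv (gram X) *v (transpose X *v y)"

end

theory Submission imports Defs begin

lemma inv_lr:
  assumes "invertible (A::real^'n^'n)"
  shows "matrix_inv A ** A = mat 1" "A ** matrix_inv A = mat 1"
proof -
  have "A ** matrix_inv A = mat 1 \<and> matrix_inv A ** A = mat 1"
    using assms unfolding invertible_def matrix_inv_def by (rule someI_ex)
  then show "matrix_inv A ** A = mat 1" "A ** matrix_inv A = mat 1" by auto
qed

lemma mv_sum: "(A::real^'a^'b) *v sum f S = (\<Sum>x\<in>S. A *v f x)"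
  by (induct S rule: infinite_finite_induct) (auto simp: matrix_vector_right_distrib)

lemma blockmv: "blockmat blk j X *v v = blockvec blk j (X *v v)"
  by (simp add: blockmat_def blockvec_def matrix_vector_mult_def vec_eq_iff)

lemma tsplit:
  fixes X :: "real^'d^'n"
  assumes "\<And>k. blk k \<in> {1..E}"
  shows "transpose X *v v = (\<Sum>j\<in>{1..E}. transpose (blockmat blk j X) *v blockvec blk j v)"
  unfolding vec_eq_iff
proof
  fix a
  have "(\<Sum>j\<in>{1..E}. transpose (blockmat blk j X) *v blockvec blk j v) $ a
      = (\<Sum>j\<in>{1..E}. \<Sum>k\<in>UNIV. if blk k = j then X $ k $ a * v $ k else 0)"
    by (simp add: sum_component matrix_vector_mult_def transpose_def blockmat_def blockvec_def if_distrib cong: if_cong)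
  also have "\<dots> = (\<Sum>k\<in>UNIV. \<Sum>j\<in>{1..E}. if blk k = j then X $ k $ a * v $ k else 0)"
    by (rule sum.swap)
  also have "\<dots> = (\<Sum>k\<in>UNIV. X $ k $ a * v $ k)"
    using assms by (simp add: sum.delta)
  also have "\<dots> = (transpose X *v v) $ a"
    by (simp add: matrix_vector_mult_def transpose_def)
  finally show "(transpose X *v v) $ a = (\<Sum>j\<in>{1..E}. transpose (blockmat blk j X) *v blockvec blk j v) $ a" by simp
qed

theorem theorem2:
  fixes X :: "real^'d^'n" and y r :: "real^'n"
    and E :: nat and blk :: "'n \<Rightarrow> nat"
    and \<beta> :: "nat \<Rightarrow> real^'d" and \<gamma> :: real
  assumes blk: "\<And>k. blk k \<in> {1..E}"
    and inv: "\<And>i. i \<in> {1..E} \<Longrightarrow> invertible (gram (blockmat blk i X))"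
    and model: "\<And>k. y $ k = (X $ k) \<bullet> \<beta> (blk k) + r $ k"
    and gam: "0 < \<gamma>" "\<gamma> \<le> 1"
  defines "wstar \<equiv> lsq X y"
    and "wb \<equiv> (\<lambda>i. lsq (blockmat blk i X) (blockvec blk i y))"
    and "\<eta> \<equiv> lsq X r"
    and "\<eta>b \<equiv> (\<lambda>i. lsq (blockmat blk i X) (blockvec blk i r))"
    and "\<Delta> \<equiv> (\<lambda>i. \<Sum>j\<in>{1..E} - {i}. matrix_inv (gram X) *v (gram (blockmat blk j X) *v (\<beta> i - \<beta> j)))"
  shows "((\<forall>i\<in>{1..E}. norm (\<Delta> i) \<ge> norm (\<beta> i + \<eta>) + (1 / sqrt \<gamma>) * norm (\<beta> i + \<eta>b i))
            \<longrightarrow> Max ((\<lambda>i. (norm (wb i))\<^sup>2) ` {1..E}) \<le> \<gamma> * (norm wstar)\<^sup>2)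
       \<and> ((norm \<eta> \<le> Min ((\<lambda>i. norm (\<beta> i)) ` {1..E})
            \<and> (\<forall>i\<in>{1..E}. norm (\<eta>b i) \<le> norm (\<beta> i))
            \<and> Min ((\<lambda>i. norm (\<Delta> i) - (4 / sqrt \<gamma>) * norm (\<beta> i)) ` {1..E}) \<ge> 0)
            \<longrightarrow> Max ((\<lambda>i. (norm (wb i))\<^sup>2) ` {1..E}) \<le> \<gamma> * (norm wstar)\<^sup>2)"
proof -
  define Z where "Z = gram X"
  define Zi where "Zi = matrix_inv Z"
  define XB where "XB = (\<lambda>j. blockmat blk j X)"
  define S where "S = (\<Sum>j\<in>{1..E}. gram (XB j) *v \<beta> j)"
  obtain k0 :: 'n where True by simp
  have E1: "1 \<in> {1..E}" using blk[of k0] by auto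
  have F1: "blockvec blk j y = XB j *v \<beta> j + blockvec blk j r" for j
    by (auto simp: XB_def blockmat_def blockvec_def vec_eq_iff model matrix_mult_dot)
  have F2: "transpose (XB j) *v blockvec blk j y = gram (XB j) *v \<beta> j + transpose (XB j) *v blockvec blk j r" for j
    unfolding F1 by (simp add: matrix_vector_right_distrib matrix_vector_mul_assoc gram_def)
  have wbi: "wb i = \<beta> i + \<eta>b i" if "i \<in> {1..E}" for i
  proof -
    have I: "matrix_inv (gram (XB i)) ** gram (XB i) = mat 1" using inv_lr(1)[OF inv[OF that]] XB_def by simp
    have "wb i = matrix_inv (gram (XB i)) *v (gram (XB i) *v \<beta> i + transpose (XB i) *v blockvec blk i r)"
      using F2[of i] unfolding wb_def lsq_def XB_def by simp
    also have "\<dots> = \<beta> i + \<eta>b i"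
      by (simp add: matrix_vector_right_distrib matrix_vector_mul_assoc I[unfolded XB_def] \<eta>b_def lsq_def XB_def)
    finally show ?thesis .
  qed
  have Zsplit: "Z *v v = (\<Sum>j\<in>{1..E}. gram (XB j) *v v)" for v
  proof -
    have "Z *v v = transpose X *v (X *v v)" by (simp add: Z_def gram_def matrix_vector_mul_assoc)
    also have "\<dots> = (\<Sum>j\<in>{1..E}. transpose (XB j) *v (XB j *v v))"
      by (simp only: tsplit[of blk E X "X *v v", OF blk] XB_def blockmv)
    finally show ?thesis by (simp add: gram_def matrix_vector_mul_assoc)
  qed
  have Zinv: "invertible Z"
  proof -
    have "\<forall>v. Z *v v = 0 \<longrightarrow> v = 0"
    proof (intro allI impI)
      fix v assume Zv: "Z *v v = 0"
      have "(X *v v) \<bullet> (X *v v) = v \<bullet> (transpose X *v (X *v v))"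
        using dot_lmul_matrix[of v "transpose X" "X *v v"] by simp
      also have "\<dots> = 0" using Zv by (simp add: Z_def gram_def matrix_vector_mul_assoc)
      finally have Xv: "X *v v = 0" by simp
      have b0: "blockvec blk 1 (X *v v) = 0" by (simp add: Xv blockvec_def vec_eq_iff)
      have "gram (XB 1) *v v = 0"
        by (simp only: gram_def XB_def matrix_vector_mul_assoc[symmetric] blockmv b0 matrix_vector_mult_0_right)
      then have "(matrix_inv (gram (XB 1)) ** gram (XB 1)) *v v = 0"
        by (simp add: matrix_vector_mul_assoc[symmetric])
      then show "v = 0" using inv_lr(1)[OF inv[OF E1]] by (simp add: XB_def)
    qed
    then obtain B where "B ** Z = mat 1" using matrix_left_invertible_ker by blast
    then show ?thesis unfolding invertible_def using matrix_left_right_inverse by blast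
  qed
  have ZI: "Zi ** Z = mat 1" using inv_lr(1)[OF Zinv] Zi_def by simp
  have ws: "wstar = Zi *v S + \<eta>"
  proof -
    have "transpose X *v y = (\<Sum>j\<in>{1..E}. gram (XB j) *v \<beta> j + transpose (XB j) *v blockvec blk j r)"
      by (simp only: tsplit[of blk E X y, OF blk] F2[unfolded XB_def] XB_def)
    also have "\<dots> = S + transpose X *v r"
      by (simp only: sum.distrib S_def tsplit[of blk E X r, OF blk] XB_def)
    finally show ?thesis
      by (simp add: wstar_def lsq_def \<eta>_def Zi_def Z_def matrix_vector_right_distrib)
  qed
  have Di: "\<Delta> i = \<beta> i - Zi *v S" if "i \<in> {1..E}" for i
  proof -
    have "(\<Sum>j\<in>{1..E} - {i}. gram (XB j) *v (\<beta> i - \<beta> j)) = (\<Sum>j\<in>{1..E}. gram (XB j) *v (\<beta> i - \<beta> j))"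
      using sum.remove[OF _ that, of "\<lambda>j. gram (XB j) *v (\<beta> i - \<beta> j)"] by simp
    also have "\<dots> = Z *v \<beta> i - S"
      by (simp add: Zsplit S_def matrix_vector_mult_diff_distrib sum_subtractf)
    finally have e: "(\<Sum>j\<in>{1..E} - {i}. gram (XB j) *v (\<beta> i - \<beta> j)) = Z *v \<beta> i - S" .
    have "\<Delta> i = Zi *v (\<Sum>j\<in>{1..E} - {i}. gram (XB j) *v (\<beta> i - \<beta> j))"
      unfolding \<Delta>_def Zi_def Z_def XB_def by (simp only: mv_sum)
    also have "\<dots> = Zi *v (Z *v \<beta> i - S)" by (simp only: e)
    finally show ?thesis by (simp add: matrix_vector_mult_diff_distrib matrix_vector_mul_assoc ZI)
  qed
  have key: "(norm (wb i))\<^sup>2 \<le> \<gamma> * (norm wstar)\<^sup>2"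
    if i: "i \<in> {1..E}" and h: "norm (\<Delta> i) \<ge> norm (\<beta> i + \<eta>) + (1 / sqrt \<gamma>) * norm (\<beta> i + \<eta>b i)" for i
  proof -
    have "\<Delta> i = (\<beta> i + \<eta>) - wstar" using Di[OF i] ws by simp
    then have "norm (\<Delta> i) \<le> norm (\<beta> i + \<eta>) + norm wstar"
      by (metis norm_triangle_ineq4)
    with h have "(1 / sqrt \<gamma>) * norm (wb i) \<le> norm wstar" using wbi[OF i] by simp
    then have a: "norm (wb i) \<le> sqrt \<gamma> * norm wstar" using gam
      by (simp add: field_simps)
    have "(norm (wb i))\<^sup>2 \<le> (sqrt \<gamma> * norm wstar)\<^sup>2"
      by (rule power_mono[OF a]) simp
    also have "\<dots> = \<gamma> * (norm wstar)\<^sup>2" using gam by (simp add: power_mult_distrib)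
    finally show ?thesis .
  qed
  have fin: "finite {1..E}" "{1..E} \<noteq> {}" using E1 by auto
  have P1: "(\<forall>i\<in>{1..E}. norm (\<Delta> i) \<ge> norm (\<beta> i + \<eta>) + (1 / sqrt \<gamma>) * norm (\<beta> i + \<eta>b i))
            \<longrightarrow> Max ((\<lambda>i. (norm (wb i))\<^sup>2) ` {1..E}) \<le> \<gamma> * (norm wstar)\<^sup>2"
    using key fin by (auto simp: Max_le_iff)
  moreover have "(norm \<eta> \<le> Min ((\<lambda>i. norm (\<beta> i)) ` {1..E})
            \<and> (\<forall>i\<in>{1..E}. norm (\<eta>b i) \<le> norm (\<beta> i))
            \<and> Min ((\<lambda>i. norm (\<Delta> i) - (4 / sqrt \<gamma>) * norm (\<beta> i)) ` {1..E}) \<ge> 0)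
            \<longrightarrow> Max ((\<lambda>i. (norm (wb i))\<^sup>2) ` {1..E}) \<le> \<gamma> * (norm wstar)\<^sup>2"
  proof
    assume A: "norm \<eta> \<le> Min ((\<lambda>i. norm (\<beta> i)) ` {1..E})
            \<and> (\<forall>i\<in>{1..E}. norm (\<eta>b i) \<le> norm (\<beta> i))
            \<and> Min ((\<lambda>i. norm (\<Delta> i) - (4 / sqrt \<gamma>) * norm (\<beta> i)) ` {1..E}) \<ge> 0"
    have "norm (\<Delta> i) \<ge> norm (\<beta> i + \<eta>) + (1 / sqrt \<gamma>) * norm (\<beta> i + \<eta>b i)" if i: "i \<in> {1..E}" for i
    proof -
      have e1: "norm \<eta> \<le> norm (\<beta> i)" using A fin i by (auto simp: Min_le_iff)
      have e2: "norm (\<eta>b i) \<le> norm (\<beta> i)" using A i by auto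
      have d: "norm (\<Delta> i) - (4 / sqrt \<gamma>) * norm (\<beta> i) \<ge> 0" using A fin i by (auto simp: Min_ge_iff)
      have n1: "norm (\<beta> i + \<eta>) \<le> 2 * norm (\<beta> i)" using e1 norm_triangle_ineq[of "\<beta> i" \<eta>] by simp
      have n2: "norm (\<beta> i + \<eta>b i) \<le> 2 * norm (\<beta> i)" using e2 norm_triangle_ineq[of "\<beta> i" "\<eta>b i"] by simp
      have s: "1 \<le> 1 / sqrt \<gamma>" using gam by (simp add: real_sqrt_le_1_iff)
      have "(1 / sqrt \<gamma>) * norm (\<beta> i + \<eta>b i) \<le> (1 / sqrt \<gamma>) * (2 * norm (\<beta> i))"
        by (rule mult_left_mono[OF n2]) (use gam in simp)
      moreover have "2 * norm (\<beta> i) \<le> (1 / sqrt \<gamma>) * (2 * norm (\<beta> i))"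
        using mult_right_mono[OF s, of "2 * norm (\<beta> i)"] by simp
      moreover have "(4 / sqrt \<gamma>) * norm (\<beta> i) = 2 * ((1 / sqrt \<gamma>) * (2 * norm (\<beta> i)))" by simp
      ultimately show ?thesis using n1 d by linarith
    qed
    then show "Max ((\<lambda>i. (norm (wb i))\<^sup>2) ` {1..E}) \<le> \<gamma> * (norm wstar)\<^sup>2" using P1 by blast
  qed
  ultimately show ?thesis by blast
qed

end
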